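(* Let $X$ be a locally compact Hausdorff space, $\tau$ a topological measure on $X$, and $O\in\mathcal O(X)$. Let $\widehat O=O\cup\{\infty\}$ be the one-point compactification of $O$, so that the open subsets of $\widehat O$ are the open $U\subset O$ and the sets $(O- K)\cup\{\infty\}$ with $K\subset O$ compact, and the compact subsets of $\widehat O$ are the compact $K\subset O$ and the sets $(O- U)\cup\{\infty\}$ with $U\subset O$ open. Define $\widehat\tau_O$ on $\mathcal A(\widehat O)$ by $\widehat\tau_O(U)=\tau(U)$, $\widehat\tau_O(K)=\tau(K)$, $\widehat\tau_O((O- K)\cup\{\infty\})=\tau(O- K)$, $\widehat\tau_O((O- U)\cup\{\infty\})=\tau(O)-\tau(U)$ for $U\subset O$ open and $K\subset O$ compact. Then $\widehat\tau_O$ is a topological measure on $\widehat O$.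
   Context: For a locally compact Hausdorff space $Y$: $\mathcal K(Y)$ is the family of compact subsets, $\mathcal O(Y)$ the family of open subsets with compact closure, $\mathcal A(Y)=\mathcal K(Y)\cup\mathcal O(Y)$ (for compact $Y$, $\mathcal O(Y)$ is all open sets). A topological measure on $Y$ is a function $\tau:\mathcal A(Y)\to[0,\infty)$ such that: (additivity) $\tau(A\cup A')=\tau(A)+\tau(A')$ whenever $A,A'\in\mathcal A(Y)$ are disjoint and $A\cup A'\in\mathcal A(Y)$; (monotonicity) $\tau(A)\le\tau(A')$ for $A\subset A'$ in $\mathcal A(Y)$; (regularity) $\tau(K)=\inf\{\tau(O)\mid O\in\mathcal O(Y),O\supset K\}$ for $K\in\mathcal K(Y)$ and $\tau(O)=\sup\{\tau(K)\mid K\in\mathcal K(Y),K\subset O\}$ for $O\in\mathcal O(Y)$. *)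

theory Defs
  imports "HOL-Analysis.Analysis"
begin

definition tm_K :: "'a topology \<Rightarrow> 'a set set" where
  "tm_K T = {K. compactin T K}"

definition tm_O :: "'a topology \<Rightarrow> 'a set set" where
  "tm_O T = {U. openin T U \<and> compactin T (T closure_of U)}"

definition tm_A :: "'a topology \<Rightarrow> 'a set set" where
  "tm_A T = tm_K T \<union> tm_O T"

definition topological_measure :: "'a topology \<Rightarrow> ('a set \<Rightarrow> real) \<Rightarrow> bool" where
  "topological_measure T \<mu> \<longleftrightarrow>
     (\<forall>A\<in>tm_A T. 0 \<le> \<mu> A) \<and>
     (\<forall>A\<in>tm_A T. \<forall>B\<in>tm_A T. A \<inter> B = {} \<and> A \<union> B \<in> tm_A T \<longrightarrow> \<mu> (A \<union> B) = \<mu> A + \<mu> B) \<and>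
     (\<forall>A\<in>tm_A T. \<forall>B\<in>tm_A T. A \<subseteq> B \<longrightarrow> \<mu> A \<le> \<mu> B) \<and>
     (\<forall>K\<in>tm_K T. \<mu> K = Inf (\<mu> ` {U \<in> tm_O T. K \<subseteq> U})) \<and>
     (\<forall>U\<in>tm_O T. \<mu> U = Sup (\<mu> ` {K \<in> tm_K T. K \<subseteq> U}))"

text \<open>One-point compactification of the open set W of X, carried by the type 'a option,
  with None playing the role of the point at infinity and Some the embedding of W.\<close>
definition opc_open :: "'a topology \<Rightarrow> 'a set \<Rightarrow> 'a option set \<Rightarrow> bool" where
  "opc_open X W A \<longleftrightarrow>
     (\<exists>U. openin X U \<and> U \<subseteq> W \<and> A = Some ` U) \<or>
     (\<exists>K. compactin X K \<and> K \<subseteq> W \<and> A = Some ` (W - K) \<union> {None})"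

definition opc :: "'a topology \<Rightarrow> 'a set \<Rightarrow> 'a option topology" where
  "opc X W = topology (opc_open X W)"

definition tau_hat :: "'a topology \<Rightarrow> 'a set \<Rightarrow> ('a set \<Rightarrow> real) \<Rightarrow> 'a option set \<Rightarrow> real" where
  "tau_hat X W \<tau> A =
     (if None \<in> A then
        (if openin (opc X W) A then \<tau> (Some -` A) else \<tau> W - \<tau> (W - Some -` A))
      else \<tau> (Some -` A))"

end

theory Submission
  imports Defs
begin


lemma some_nf: "S = Some ` (Some -` S) \<union> (if None \<in> S then {None} else {})"
proof (rule set_eqI)
  fix x show "x \<in> S \<longleftrightarrow> x \<in> Some ` (Some -` S) \<union> (if None \<in> S then {None} else {})"
    by (cases x) auto
qed

locale opcs =
  fixes X :: "'a topology" and \<tau> :: "'a set \<Rightarrow> real" and W :: "'a set"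
  assumes H: "Hausdorff_space X" and LC: "locally_compact_space X"
    and TM: "topological_measure X \<tau>" and WO: "W \<in> tm_O X"
begin

lemma W_open: "openin X W" and W_cl: "compactin X (X closure_of W)"
  using WO by (auto simp: tm_O_def)

lemma W_sub: "W \<subseteq> topspace X" using W_open openin_subset by blast

lemma opc_open_iff:
  "opc_open X W S \<longleftrightarrow> Some -` S \<subseteq> W \<and> openin X (Some -` S) \<and>
      (None \<in> S \<longrightarrow> compactin X (W - Some -` S))"
proof
  assume "opc_open X W S"
  then show "Some -` S \<subseteq> W \<and> openin X (Some -` S) \<and> (None \<in> S \<longrightarrow> compactin X (W - Some -` S))"
    unfolding opc_open_def
  proof (elim disjE exE conjE)
    fix U assume "openin X U" "U \<subseteq> W" "S = Some ` U"
    then show ?thesis by (auto simp: inj_vimage_image_eq)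
  next
    fix K assume K: "compactin X K" "K \<subseteq> W" "S = Some ` (W - K) \<union> {None}"
    then have "Some -` S = W - K" by auto
    moreover have "openin X (W - K)"
      using K H W_open by (simp add: compactin_imp_closedin openin_diff)
    moreover have "W - (W - K) = K" using K by auto
    ultimately show ?thesis using K by auto
  qed
next
  assume A: "Some -` S \<subseteq> W \<and> openin X (Some -` S) \<and> (None \<in> S \<longrightarrow> compactin X (W - Some -` S))"
  show "opc_open X W S"
  proof (cases "None \<in> S")
    case True
    have e: "W - (W - Some -` S) = Some -` S" using A by auto
    have "S = Some ` (W - (W - Some -` S)) \<union> {None}"
      using True some_nf[of S] unfolding e by simp
    then show ?thesis unfolding opc_open_def using A True
      by (intro disjI2 exI[of _ "W - Some -` S"]) auto
  next
    case False
    have "S = Some ` (Some -` S)" using False some_nf[of S] by simp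
    then show ?thesis unfolding opc_open_def using A
      by (intro disjI1 exI[of _ "Some -` S"]) auto
  qed
qed

lemma istop: "istopology (opc_open X W)"
  unfolding istopology_def
proof (intro conjI allI impI ballI)
  fix S T assume S: "opc_open X W S" and T: "opc_open X W T"
  show "opc_open X W (S \<inter> T)"
    unfolding opc_open_iff
  proof (intro conjI impI)
    show "Some -` (S \<inter> T) \<subseteq> W" using S T by (auto simp: opc_open_iff)
    show "openin X (Some -` (S \<inter> T))" using S T by (auto simp: opc_open_iff vimage_Int)
    assume "None \<in> S \<inter> T"
    then have "compactin X ((W - Some -` S) \<union> (W - Some -` T))"
      using S T by (auto simp: opc_open_iff intro: compactin_Un)
    moreover have "(W - Some -` S) \<union> (W - Some -` T) = W - Some -` (S \<inter> T)" by auto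
    ultimately show "compactin X (W - Some -` (S \<inter> T))" by simp
  qed
next
  fix \<K> assume K: "\<forall>K\<in>\<K>. opc_open X W K"
  show "opc_open X W (\<Union>\<K>)"
    unfolding opc_open_iff
  proof (intro conjI impI)
    show "Some -` \<Union>\<K> \<subseteq> W" using K by (auto simp: opc_open_iff)
    have "Some -` \<Union>\<K> = \<Union>((\<lambda>S. Some -` S) ` \<K>)" by auto
    then show opn: "openin X (Some -` \<Union>\<K>)" using K
      by (auto simp: opc_open_iff intro!: openin_Union)
    assume "None \<in> \<Union>\<K>"
    then obtain S0 where S0: "S0 \<in> \<K>" "None \<in> S0" by auto
    then have c0: "compactin X (W - Some -` S0)" using K by (auto simp: opc_open_iff)
    have eq: "W - Some -` \<Union>\<K> = (W - Some -` S0) - Some -` \<Union>\<K>" using S0 by auto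
    have "closedin X ((W - Some -` S0) - Some -` \<Union>\<K>)"
      using c0 H opn by (simp add: compactin_imp_closedin closedin_diff)
    then show "compactin X (W - Some -` \<Union>\<K>)"
      using eq c0 closed_compactin by (metis Diff_subset)
  qed
qed

abbreviation "T \<equiv> opc X W"

lemma openT: "openin T S \<longleftrightarrow> opc_open X W S"
  unfolding opc_def using istop by simp

lemma topT: "topspace T = Some ` W \<union> {None}"
proof -
  have "opc_open X W (Some ` W \<union> {None})"
  proof -
    have "Some -` (Some ` W \<union> {None}) = W" by auto
    then show ?thesis unfolding opc_open_iff using W_open by simp
  qed
  moreover have "S \<subseteq> Some ` W \<union> {None}" if "opc_open X W S" for S
  proof
    fix x assume "x \<in> S"
    then show "x \<in> Some ` W \<union> {None}" using that unfolding opc_open_iff by (cases x) auto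
  qed
  ultimately show ?thesis unfolding topspace_def openT by blast
qed

lemma topT_Some[simp]: "Some a \<in> topspace T \<longleftrightarrow> a \<in> W"
  unfolding topT by blast

lemma topT_None[simp]: "None \<in> topspace T"
  unfolding topT by blast

lemma vim_Some_None[simp]: "Some -` (Some ` B \<union> {None}) = B"
  by auto

lemma vim_Some_None'[simp]: "Some -` (insert None (Some ` B)) = B"
  by auto

lemma vim_Some[simp]: "Some -` (Some ` B) = B"
  by auto

lemma K_closed: "compactin X K \<Longrightarrow> closedin X K"
  using H by (rule compactin_imp_closedin)

lemma open_cocpt: "compactin X K \<Longrightarrow> K \<subseteq> W \<Longrightarrow> openin T (Some ` (W - K) \<union> {None})"
  unfolding openT opc_open_iff vim_Some_None
proof (intro conjI impI)
  assume K: "compactin X K" "K \<subseteq> W"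
  show "W - K \<subseteq> W" by blast
  show "openin X (W - K)" using K_closed[OF K(1)] W_open by (simp add: openin_diff)
  have "W - (W - K) = K" using K(2) by blast
  then show "compactin X (W - (W - K))" using K(1) by simp
qed

lemma open_Some: "openin X U \<Longrightarrow> U \<subseteq> W \<Longrightarrow> openin T (Some ` U)"
  unfolding openT opc_open_iff vim_Some by simp


lemma closedT: "closedin T A \<longleftrightarrow> A \<subseteq> topspace T \<and> Some -` A \<subseteq> W \<and> openin X (W - Some -` A)
   \<and> (None \<notin> A \<longrightarrow> compactin X (Some -` A))"
proof -
  have e1: "Some -` (topspace T - A) = W - Some -` A" unfolding topT by auto
  have e2: "None \<in> topspace T - A \<longleftrightarrow> None \<notin> A" unfolding topT by auto
  have e3: "A \<subseteq> topspace T \<Longrightarrow> Some -` A \<subseteq> W" unfolding topT by auto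
  have e4: "Some -` A \<subseteq> W \<Longrightarrow> W - (W - Some -` A) = Some -` A" by auto
  have "closedin T A \<longleftrightarrow> A \<subseteq> topspace T \<and> openin X (W - Some -` A) \<and> (None \<notin> A \<longrightarrow> compactin X (W - (W - Some -` A)))"
    unfolding closedin_def openT opc_open_iff e1 e2 by blast
  then show ?thesis using e3 e4 by (intro iffI; simp; fastforce)
qed

lemma cont_Some: "continuous_map (subtopology X W) T Some"
  unfolding continuous_map_def
proof (intro conjI allI impI)
  have "topspace (subtopology X W) = W" using W_sub by auto
  then show "Some \<in> topspace (subtopology X W) \<rightarrow> topspace T" unfolding topT by auto
  fix U assume "openin T U"
  then have U: "Some -` U \<subseteq> W" "openin X (Some -` U)" unfolding openT opc_open_iff by auto
  have "{x \<in> topspace (subtopology X W). Some x \<in> U} = Some -` U"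
    using U \<open>topspace (subtopology X W) = W\<close> by auto
  then show "openin (subtopology X W) {x \<in> topspace (subtopology X W). Some x \<in> U}"
    using U by (simp add: openin_open_subtopology[OF W_open])
qed

lemma compact_Some: "compactin X K \<Longrightarrow> K \<subseteq> W \<Longrightarrow> compactin T (Some ` K)"
  using image_compactin[OF _ cont_Some] compactin_subtopology by blast

lemma compT: "compact_space T"
  unfolding compact_space_def compactin_def
proof (intro conjI allI impI)
  show "topspace T \<subseteq> topspace T" by simp
  fix \<U> assume A: "(\<forall>U\<in>\<U>. openin T U) \<and> topspace T \<subseteq> \<Union>\<U>"
  have "None \<in> topspace T" unfolding topT by simp
  then obtain V where V: "V \<in> \<U>" "None \<in> V" using A by blast
  define K where "K = W - Some -` V"
  have K: "compactin X K" "K \<subseteq> W" using A V unfolding K_def openT opc_open_iff by auto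
  have "Some ` K \<subseteq> Some ` W \<union> {None}" using K(2) by blast
  then have sK: "Some ` K \<subseteq> topspace T" unfolding topT .
  have AU: "topspace T \<subseteq> \<Union>\<U>" using A by (rule conjunct2)
  have "Some ` K \<subseteq> \<Union>\<U>" using subset_trans[OF sK AU] .
  moreover have "(\<forall>U\<in>\<U>. openin T U) \<and> Some ` K \<subseteq> \<Union>\<U> \<longrightarrow> (\<exists>F. finite F \<and> F \<subseteq> \<U> \<and> Some ` K \<subseteq> \<Union>F)"
    using compact_Some[OF K] unfolding compactin_def by (rule conjunct2[THEN spec])
  ultimately obtain F where F: "finite F" "F \<subseteq> \<U>" "Some ` K \<subseteq> \<Union>F"
    using A by blast
  show "\<exists>F. finite F \<and> F \<subseteq> \<U> \<and> topspace T \<subseteq> \<Union>F"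
  proof (intro exI conjI)
    show "finite (insert V F)" "insert V F \<subseteq> \<U>" using F V by auto
    show "topspace T \<subseteq> \<Union>(insert V F)"
    proof
      fix y assume y: "y \<in> topspace T"
      show "y \<in> \<Union>(insert V F)"
      proof (cases y)
        case None then show ?thesis using V by auto
      next
        case (Some x)
        then have "x \<in> W" using y by simp
        show ?thesis
        proof (cases "Some x \<in> V")
          case True then show ?thesis using Some by simp
        next
          case False
          then have "x \<in> K" using \<open>x \<in> W\<close> unfolding K_def by simp
          then have "Some x \<in> \<Union>F" using F(3) by blast
          then show ?thesis using Some by simp
        qed
      qed
    qed
  qed
qed

lemma sep_None:
  assumes b: "b \<in> W"
  shows "\<exists>U V. openin T U \<and> openin T V \<and> None \<in> U \<and> Some b \<in> V \<and> disjnt U V"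
proof -
  have lc: "locally_compact_space (subtopology X W)"
    using locally_compact_space_open_subset H LC W_open by blast
  have "b \<in> topspace (subtopology X W)" using b W_sub by auto
  then obtain U K where UK: "openin (subtopology X W) U" "compactin (subtopology X W) K" "b \<in> U" "U \<subseteq> K"
    using lc unfolding locally_compact_space_def by blast
  then have U: "openin X U" "U \<subseteq> W" and K: "compactin X K" "K \<subseteq> W"
    using UK(1,2) by (simp_all add: openin_open_subtopology[OF W_open] compactin_subtopology)
  show ?thesis
  proof (intro exI conjI)
    show "openin T (Some ` (W - K) \<union> {None})" using open_cocpt K by blast
    show "openin T (Some ` U)" using open_Some U by blast
    show "None \<in> Some ` (W - K) \<union> {None}" by simp
    show "Some b \<in> Some ` U" using UK by simp
    show "disjnt (Some ` (W - K) \<union> {None}) (Some ` U)" using UK unfolding disjnt_def by auto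
  qed
qed

lemma HausT: "Hausdorff_space T"
  unfolding Hausdorff_space_def
proof (intro allI impI)
  fix x y assume xy: "x \<in> topspace T \<and> y \<in> topspace T \<and> x \<noteq> y"
  show "\<exists>U V. openin T U \<and> openin T V \<and> x \<in> U \<and> y \<in> V \<and> disjnt U V"
  proof (cases x)
    case None
    then obtain b where "y = Some b" "b \<in> W" using xy by (cases y) auto
    then show ?thesis using sep_None None by blast
  next
    case (Some a)
    then have a: "a \<in> W" using xy by simp
    show ?thesis
    proof (cases y)
      case None
      then show ?thesis using sep_None[OF a] Some by (meson disjnt_sym)
    next
      case (Some b)
      with xy \<open>x = Some a\<close> have b: "b \<in> W" "a \<noteq> b" by simp_all
      have ta: "a \<in> topspace X" and tb: "b \<in> topspace X" using W_sub a b by auto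
      from H[unfolded Hausdorff_space_def, rule_format, OF conjI[OF ta conjI[OF tb b(2)]]]
      obtain U V where UV: "openin X U" "openin X V" "a \<in> U" "b \<in> V" "disjnt U V"
        by blast
      show ?thesis
      proof (intro exI conjI)
        show "openin T (Some ` (U \<inter> W))"
          using open_Some[of "U \<inter> W"] openin_Int[OF UV(1) W_open] by blast
        show "openin T (Some ` (V \<inter> W))"
          using open_Some[of "V \<inter> W"] openin_Int[OF UV(2) W_open] by blast
        show "x \<in> Some ` (U \<inter> W)" using UV(3) a \<open>x = Some a\<close> by blast
        show "y \<in> Some ` (V \<inter> W)" using UV(4) b(1) Some by blast
        show "disjnt (Some ` (U \<inter> W)) (Some ` (V \<inter> W))" using UV(5) unfolding disjnt_def by blast
      qed
    qed
  qed
qed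

lemma compactT_iff: "compactin T A \<longleftrightarrow> closedin T A"
  using compactin_imp_closedin[OF HausT] closed_compactin[of T "topspace T" A] compT
  unfolding compact_space_def by (meson closedin_subset)

lemma tmK_T: "A \<in> tm_K T \<longleftrightarrow> closedin T A"
  by (simp add: tm_K_def compactT_iff)

lemma tmO_T: "A \<in> tm_O T \<longleftrightarrow> openin T A"
  unfolding tm_O_def using compactT_iff by auto

definition PX :: "'a set \<Rightarrow> bool" where
  "PX C \<longleftrightarrow> C \<subseteq> W \<and> (openin X C \<or> compactin X C)"

lemma PX_tmA: "PX C \<Longrightarrow> C \<in> tm_A X"
proof -
  assume P: "PX C"
  show ?thesis
  proof (cases "compactin X C")
    case True then show ?thesis unfolding tm_A_def tm_K_def by simp
  next
    case False
    then have o: "openin X C" and c: "C \<subseteq> W" using P unfolding PX_def by auto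
    have "X closure_of C \<subseteq> X closure_of W" using c by (rule closure_of_mono)
    then have "compactin X (X closure_of C)"
      using closed_compactin[OF W_cl] closedin_closure_of by blast
    then show ?thesis using o unfolding tm_A_def tm_O_def by simp
  qed
qed

lemma tmA_T: "A \<in> tm_A T \<Longrightarrow> A \<subseteq> topspace T \<and> (None \<notin> A \<longrightarrow> PX (Some -` A)) \<and> (None \<in> A \<longrightarrow> PX (W - Some -` A))"
proof -
  assume "A \<in> tm_A T"
  then have "closedin T A \<or> openin T A" unfolding tm_A_def using tmK_T tmO_T by blast
  then show ?thesis
  proof
    assume c: "closedin T A"
    then have "A \<subseteq> topspace T" by (rule closedin_subset)
    moreover have "Some -` A \<subseteq> W" "openin X (W - Some -` A)" "None \<notin> A \<Longrightarrow> compactin X (Some -` A)"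
      using c unfolding closedT by auto
    ultimately show ?thesis unfolding PX_def by auto
  next
    assume o: "openin T A"
    then have "A \<subseteq> topspace T" by (rule openin_subset)
    moreover have "Some -` A \<subseteq> W" "openin X (Some -` A)" "None \<in> A \<Longrightarrow> compactin X (W - Some -` A)"
      using o unfolding openT opc_open_iff by auto
    ultimately show ?thesis unfolding PX_def by auto
  qed
qed


end



lemma inf_char:
  fixes a :: real
  assumes "S \<noteq> {}" "\<And>x. x \<in> S \<Longrightarrow> a \<le> x" "\<And>e. e > 0 \<Longrightarrow> \<exists>x\<in>S. x < a + e"
  shows "Inf S = a"
proof (rule antisym)
  show "a \<le> Inf S" using assms(1,2) by (rule cInf_greatest)
  show "Inf S \<le> a"
  proof (rule field_le_epsilon)
    fix e :: real assume "e > 0"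
    then obtain x where x: "x \<in> S" "x < a + e" using assms(3) by blast
    have "bdd_below S" using assms(2) unfolding bdd_below_def by blast
    then have "Inf S \<le> x" using x(1) by (rule cInf_lower[rotated])
    then show "Inf S \<le> a + e" using x(2) by linarith
  qed
qed

lemma sup_char:
  fixes a :: real
  assumes "S \<noteq> {}" "\<And>x. x \<in> S \<Longrightarrow> x \<le> a" "\<And>e. e > 0 \<Longrightarrow> \<exists>x\<in>S. a - e < x"
  shows "Sup S = a"
proof (rule antisym)
  show "Sup S \<le> a" using assms(1,2) by (rule cSup_least)
  show "a \<le> Sup S"
  proof (rule field_le_epsilon)
    fix e :: real assume "e > 0"
    then obtain x where x: "x \<in> S" "a - e < x" using assms(3) by blast
    have "bdd_above S" using assms(2) unfolding bdd_above_def by blast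
    then have "x \<le> Sup S" using x(1) by (rule cSup_upper[rotated])
    then show "a \<le> Sup S + e" using x(2) by linarith
  qed
qed

lemma tm_transfer:
  assumes f: "topological_measure T f" and eq: "\<And>A. A \<in> tm_A T \<Longrightarrow> g A = f A"
  shows "topological_measure T g"
proof -
  have img: "g ` S = f ` S" if "S \<subseteq> tm_A T" for S
    using that eq by (intro image_cong) auto
  have s1: "{U \<in> tm_O T. K \<subseteq> U} \<subseteq> tm_A T" for K by (auto simp: tm_A_def)
  have s2: "{K \<in> tm_K T. K \<subseteq> U} \<subseteq> tm_A T" for U by (auto simp: tm_A_def)
  have KA: "K \<in> tm_K T \<Longrightarrow> K \<in> tm_A T" for K by (simp add: tm_A_def)
  have OA: "U \<in> tm_O T \<Longrightarrow> U \<in> tm_A T" for U by (simp add: tm_A_def)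
  note F = f[unfolded topological_measure_def]
  show ?thesis unfolding topological_measure_def
  proof (intro conjI ballI impI)
    fix A assume "A \<in> tm_A T" then show "0 \<le> g A" using F eq by simp
  next
    fix A B assume A: "A \<in> tm_A T" and B: "B \<in> tm_A T" and AB: "A \<inter> B = {} \<and> A \<union> B \<in> tm_A T"
    then show "g (A \<union> B) = g A + g B" using F eq by simp
  next
    fix A B assume A: "A \<in> tm_A T" and B: "B \<in> tm_A T" and AB: "A \<subseteq> B"
    then show "g A \<le> g B" using F eq by simp
  next
    fix K assume K: "K \<in> tm_K T"
    then show "g K = Inf (g ` {U \<in> tm_O T. K \<subseteq> U})" using F eq[OF KA[OF K]] img[OF s1] by simp
  next
    fix U assume U: "U \<in> tm_O T"
    then show "g U = Sup (g ` {K \<in> tm_K T. K \<subseteq> U})" using F eq[OF OA[OF U]] img[OF s2] by simp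
  qed
qed

context opcs
begin

lemmas TMd = TM[unfolded topological_measure_def]
lemma tau_nonneg: "C \<in> tm_A X \<Longrightarrow> 0 \<le> \<tau> C"
  using TMd[THEN conjunct1] by (rule bspec)
lemma tau_add: "C \<in> tm_A X \<Longrightarrow> D \<in> tm_A X \<Longrightarrow> C \<inter> D = {} \<Longrightarrow> C \<union> D \<in> tm_A X \<Longrightarrow> \<tau> (C \<union> D) = \<tau> C + \<tau> D"
  using TMd[THEN conjunct2, THEN conjunct1, rule_format] by (rule; simp)
lemma tau_mono: "C \<in> tm_A X \<Longrightarrow> D \<in> tm_A X \<Longrightarrow> C \<subseteq> D \<Longrightarrow> \<tau> C \<le> \<tau> D"
  using TMd[THEN conjunct2, THEN conjunct2, THEN conjunct1, rule_format] .
lemma tau_regK: "C \<in> tm_K X \<Longrightarrow> \<tau> C = Inf (\<tau> ` {U \<in> tm_O X. C \<subseteq> U})"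
  using TMd[THEN conjunct2, THEN conjunct2, THEN conjunct2, THEN conjunct1, rule_format] .
lemma tau_regO: "U \<in> tm_O X \<Longrightarrow> \<tau> U = Sup (\<tau> ` {K \<in> tm_K X. K \<subseteq> U})"
  using TMd[THEN conjunct2, THEN conjunct2, THEN conjunct2, THEN conjunct2, rule_format] .

lemma PX_W: "PX W" unfolding PX_def using W_open by simp
lemma PX_K: "compactin X K \<Longrightarrow> K \<subseteq> W \<Longrightarrow> PX K" unfolding PX_def by simp
lemma PX_WK: "compactin X K \<Longrightarrow> PX (W - K)"
  unfolding PX_def using K_closed W_open by (simp add: openin_diff)
lemma PX_sub: "PX C \<Longrightarrow> C \<subseteq> W" unfolding PX_def by simp
lemma open_tmO: "openin X U \<Longrightarrow> U \<subseteq> W \<Longrightarrow> U \<in> tm_O X"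
proof -
  assume o: "openin X U" and c: "U \<subseteq> W"
  have "X closure_of U \<subseteq> X closure_of W" using c by (rule closure_of_mono)
  then have "compactin X (X closure_of U)"
    using closed_compactin[OF W_cl] closedin_closure_of by blast
  then show ?thesis using o unfolding tm_O_def by simp
qed
lemma tmO_open: "U \<in> tm_O X \<Longrightarrow> openin X U" unfolding tm_O_def by simp
lemma tmK_cpt: "K \<in> tm_K X \<longleftrightarrow> compactin X K" unfolding tm_K_def by simp
lemma tmOA: "U \<in> tm_O X \<Longrightarrow> U \<in> tm_A X" unfolding tm_A_def by simp
lemma tmKA: "U \<in> tm_K X \<Longrightarrow> U \<in> tm_A X" unfolding tm_A_def by simp

lemma compl_K: "compactin X K \<Longrightarrow> K \<subseteq> W \<Longrightarrow> \<tau> (W - K) = \<tau> W - \<tau> K"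
proof -
  assume K: "compactin X K" "K \<subseteq> W"
  have e: "(W - K) \<union> K = W" using K(2) by blast
  have "\<tau> ((W - K) \<union> K) = \<tau> (W - K) + \<tau> K"
    by (rule tau_add) (use PX_tmA PX_WK[OF K(1)] PX_K[OF K] PX_W e in auto)
  then show ?thesis unfolding e by simp
qed

lemma L1: "compactin X C \<Longrightarrow> C \<subseteq> W \<Longrightarrow> PX D \<Longrightarrow> C \<inter> D = {} \<Longrightarrow> \<tau> C + \<tau> D \<le> \<tau> W"
proof -
  assume C: "compactin X C" "C \<subseteq> W" and D: "PX D" and CD: "C \<inter> D = {}"
  have "D \<subseteq> W - C" using PX_sub[OF D] CD by blast
  then have "\<tau> D \<le> \<tau> (W - C)" using PX_tmA[OF D] PX_tmA[OF PX_WK[OF C(1)]] tau_mono by blast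
  then show ?thesis using compl_K[OF C] by linarith
qed

lemma L: "PX C \<Longrightarrow> PX D \<Longrightarrow> C \<inter> D = {} \<Longrightarrow> \<tau> C + \<tau> D \<le> \<tau> W"
proof -
  assume C: "PX C" and D: "PX D" and CD: "C \<inter> D = {}"
  show ?thesis
  proof (cases "compactin X C")
    case True then show ?thesis using L1 PX_sub[OF C] D CD by blast
  next
    case F1: False
    show ?thesis
    proof (cases "compactin X D")
      case True
      have "D \<inter> C = {}" using CD by blast
      then have "\<tau> D + \<tau> C \<le> \<tau> W" using L1 True PX_sub[OF D] C by blast
      then show ?thesis by linarith
    next
      case False
      then have o: "openin X C" "openin X D" using F1 C D unfolding PX_def by auto
      have P: "PX (C \<union> D)" using o PX_sub[OF C] PX_sub[OF D] unfolding PX_def by auto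
      have "\<tau> (C \<union> D) = \<tau> C + \<tau> D" using tau_add PX_tmA C D P CD by blast
      moreover have "\<tau> (C \<union> D) \<le> \<tau> W" using tau_mono PX_tmA[OF P] PX_tmA[OF PX_W] PX_sub[OF P] by blast
      ultimately show ?thesis by linarith
    qed
  qed
qed

definition hf :: "'a option set \<Rightarrow> real" where
  "hf A = (if None \<in> A then \<tau> W - \<tau> (W - Some -` A) else \<tau> (Some -` A))"

lemma hf_eq: "A \<in> tm_A T \<Longrightarrow> tau_hat X W \<tau> A = hf A"
proof -
  assume A: "A \<in> tm_A T"
  show ?thesis
  proof (cases "None \<in> A \<and> openin T A")
    case True
    then have K: "compactin X (W - Some -` A)" and s: "Some -` A \<subseteq> W"
      unfolding openT opc_open_iff by auto
    have e: "W - (W - Some -` A) = Some -` A" using s by blast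
    have "\<tau> (Some -` A) = \<tau> W - \<tau> (W - Some -` A)"
      using compl_K[OF K] unfolding e by simp
    then show ?thesis using True unfolding tau_hat_def hf_def by simp
  next
    case False
    then show ?thesis unfolding tau_hat_def hf_def by auto
  qed
qed

lemma hf_nonneg: "A \<in> tm_A T \<Longrightarrow> 0 \<le> hf A"
proof -
  assume A: "A \<in> tm_A T"
  note P = tmA_T[OF A]
  show ?thesis
  proof (cases "None \<in> A")
    case True
    then have p: "PX (W - Some -` A)" using P by simp
    have "\<tau> (W - Some -` A) \<le> \<tau> W"
      using tau_mono[OF PX_tmA[OF p] PX_tmA[OF PX_W]] by blast
    then show ?thesis using True unfolding hf_def by simp
  next
    case False
    then have p: "PX (Some -` A)" using P by simp
    show ?thesis using False tau_nonneg[OF PX_tmA[OF p]] unfolding hf_def by simp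
  qed
qed

lemma hf_add_mixed:
  assumes A: "A \<in> tm_A T" and B: "B \<in> tm_A T" and nA: "None \<in> A" and nB: "None \<notin> B"
    and AB: "A \<inter> B = {}" and U: "A \<union> B \<in> tm_A T"
  shows "hf (A \<union> B) = hf A + hf B"
proof -
  define a where "a = Some -` A"
  define b where "b = Some -` B"
  have pa: "PX (W - a)" using tmA_T[OF A] nA unfolding a_def by simp
  have pb: "PX b" using tmA_T[OF B] nB unfolding b_def by simp
  have nU: "None \<in> A \<union> B" using nA by simp
  have vU: "Some -` (A \<union> B) = a \<union> b" unfolding a_def b_def by auto
  have "None \<in> A \<union> B \<longrightarrow> PX (W - Some -` (A \<union> B))" using tmA_T[OF U] by blast
  then have pu: "PX (W - (a \<union> b))" using nU unfolding vU by blast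
  have ab: "a \<inter> b = {}" using AB unfolding a_def b_def by auto
  have e: "W - a = (W - (a \<union> b)) \<union> b" using PX_sub[OF pb] ab by blast
  have d: "(W - (a \<union> b)) \<inter> b = {}" by blast
  have "\<tau> (W - a) = \<tau> (W - (a \<union> b)) + \<tau> b"
    using tau_add[OF PX_tmA[OF pu] PX_tmA[OF pb] d] PX_tmA[OF pa] e by simp
  moreover have "hf (A \<union> B) = \<tau> W - \<tau> (W - (a \<union> b))" using nU vU unfolding hf_def by simp
  moreover have "hf A = \<tau> W - \<tau> (W - a)" using nA unfolding hf_def a_def by simp
  moreover have "hf B = \<tau> b" using nB unfolding hf_def b_def by simp
  ultimately show ?thesis by linarith
qed

lemma hf_add:
  assumes A: "A \<in> tm_A T" and B: "B \<in> tm_A T"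
    and AB: "A \<inter> B = {}" and U: "A \<union> B \<in> tm_A T"
  shows "hf (A \<union> B) = hf A + hf B"
proof (cases "None \<in> A")
  case nA: True
  then have nB: "None \<notin> B" using AB by blast
  show ?thesis using hf_add_mixed[OF A B nA nB AB U] .
next
  case nA: False
  show ?thesis
  proof (cases "None \<in> B")
    case nB: True
    have "hf (B \<union> A) = hf B + hf A"
      using hf_add_mixed[OF B A nB nA] AB U by (simp add: Int_commute Un_commute)
    then show ?thesis by (simp add: Un_commute)
  next
    case nB: False
    define a where "a = Some -` A"
    define b where "b = Some -` B"
    have pa: "PX a" using tmA_T[OF A] nA unfolding a_def by simp
    have pb: "PX b" using tmA_T[OF B] nB unfolding b_def by simp
    have nU: "None \<notin> A \<union> B" using nA nB by simp
    have vU: "Some -` (A \<union> B) = a \<union> b" unfolding a_def b_def by auto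
    have "None \<notin> A \<union> B \<longrightarrow> PX (Some -` (A \<union> B))" using tmA_T[OF U] by blast
    then have pu: "PX (a \<union> b)" using nU unfolding vU by blast
    have ab: "a \<inter> b = {}" using AB unfolding a_def b_def by auto
    have "\<tau> (a \<union> b) = \<tau> a + \<tau> b" using tau_add[OF PX_tmA[OF pa] PX_tmA[OF pb] ab PX_tmA[OF pu]] .
    then show ?thesis using nA nB nU vU unfolding hf_def a_def b_def by simp
  qed
qed

lemma hf_mono:
  assumes A: "A \<in> tm_A T" and B: "B \<in> tm_A T" and AB: "A \<subseteq> B"
  shows "hf A \<le> hf B"
proof -
  define a where "a = Some -` A"
  define b where "b = Some -` B"
  have ab: "a \<subseteq> b" using AB unfolding a_def b_def by auto
  show ?thesis
  proof (cases "None \<in> B")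
    case nB: False
    then have nA: "None \<notin> A" using AB by blast
    have pa: "PX a" using tmA_T[OF A] nA unfolding a_def by simp
    have pb: "PX b" using tmA_T[OF B] nB unfolding b_def by simp
    have "\<tau> a \<le> \<tau> b" using tau_mono[OF PX_tmA[OF pa] PX_tmA[OF pb] ab] .
    then show ?thesis using nA nB unfolding hf_def a_def b_def by simp
  next
    case nB: True
    have pb: "PX (W - b)" using tmA_T[OF B] nB unfolding b_def by simp
    show ?thesis
    proof (cases "None \<in> A")
      case nA: True
      have pa: "PX (W - a)" using tmA_T[OF A] nA unfolding a_def by simp
      have "W - b \<subseteq> W - a" using ab by blast
      then have "\<tau> (W - b) \<le> \<tau> (W - a)" using tau_mono[OF PX_tmA[OF pb] PX_tmA[OF pa]] by blast
      then show ?thesis using nA nB unfolding hf_def a_def b_def by simp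
    next
      case nA: False
      have pa: "PX a" using tmA_T[OF A] nA unfolding a_def by simp
      have "a \<inter> (W - b) = {}" using ab by blast
      then have "\<tau> a + \<tau> (W - b) \<le> \<tau> W" using L[OF pa pb] by blast
      then show ?thesis using nA nB unfolding hf_def a_def b_def by simp
    qed
  qed
qed

end



context opcs
begin

lemma closed_Some: "compactin X K \<Longrightarrow> K \<subseteq> W \<Longrightarrow> closedin T (Some ` K)"
  using compact_Some compactT_iff by blast

lemma closed_cocpt: "openin X U \<Longrightarrow> U \<subseteq> W \<Longrightarrow> closedin T (Some ` (W - U) \<union> {None})"
proof -
  assume U: "openin X U" "U \<subseteq> W"
  have s: "Some ` (W - U) \<union> {None} \<subseteq> topspace T" unfolding topT by blast
  have e: "W - (W - U) = U" using U(2) by blast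
  show ?thesis unfolding closedT vim_Some_None e using s U(1) by simp
qed

lemma A_Some: "None \<notin> A \<Longrightarrow> A = Some ` (Some -` A)"
  using some_nf[of A] by simp

lemma A_None: "None \<in> A \<Longrightarrow> A = Some ` (Some -` A) \<union> {None}"
  using some_nf[of A] by simp

lemma tmA_of_tmK: "A \<in> tm_K T \<Longrightarrow> A \<in> tm_A T" and tmA_of_tmO: "A \<in> tm_O T \<Longrightarrow> A \<in> tm_A T"
  unfolding tm_A_def by simp_all

lemma hf_regK:
  assumes AK: "A \<in> tm_K T"
  shows "hf A = Inf (hf ` {B \<in> tm_O T. A \<subseteq> B})"
proof (rule inf_char[symmetric])
  have cA: "closedin T A" using AK tmK_T by blast
  have AA: "A \<in> tm_A T" using tmA_of_tmK[OF AK] .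
  have "topspace T \<in> {B \<in> tm_O T. A \<subseteq> B}" using tmO_T closedin_subset[OF cA] by auto
  then show "hf ` {B \<in> tm_O T. A \<subseteq> B} \<noteq> {}" by blast
  show "hf A \<le> x" if "x \<in> hf ` {B \<in> tm_O T. A \<subseteq> B}" for x
    using that hf_mono[OF AA tmA_of_tmO] by blast
  fix e :: real assume e: "e > 0"
  have "\<exists>B. B \<in> tm_O T \<and> A \<subseteq> B \<and> hf B < hf A + e"
  proof (cases "None \<in> A")
    case False
    define K where "K = Some -` A"
    have K: "compactin X K" "K \<subseteq> W" using cA False unfolding closedT K_def by auto
    have AS: "A = Some ` K" using A_Some[OF False] unfolding K_def .
    have KK: "K \<in> tm_K X" using K(1) tmK_cpt by blast
    have ne: "{U \<in> tm_O X. K \<subseteq> U} \<noteq> {}" using WO K(2) by blast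
    have bb: "bdd_below (\<tau> ` {U \<in> tm_O X. K \<subseteq> U})"
      unfolding bdd_below_def using tau_nonneg tmOA by blast
    have "Inf (\<tau> ` {U \<in> tm_O X. K \<subseteq> U}) < \<tau> K + e" using tau_regK[OF KK] e by simp
    then obtain U where U: "U \<in> tm_O X" "K \<subseteq> U" "\<tau> U < \<tau> K + e"
      using cInf_less_iff[of "\<tau> ` {U \<in> tm_O X. K \<subseteq> U}"] ne bb by auto
    have oU: "openin X (U \<inter> W)" using tmO_open[OF U(1)] W_open by (rule openin_Int)
    have pUW: "PX (U \<inter> W)" using oU unfolding PX_def by simp
    have le: "\<tau> (U \<inter> W) \<le> \<tau> U" using tau_mono[OF PX_tmA[OF pUW] tmOA[OF U(1)]] by blast
    show ?thesis
    proof (intro exI conjI)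
      show "Some ` (U \<inter> W) \<in> tm_O T" using tmO_T open_Some[OF oU] by blast
      show "A \<subseteq> Some ` (U \<inter> W)" using AS U(2) K(2) by blast
      have "hf (Some ` (U \<inter> W)) = \<tau> (U \<inter> W)" unfolding hf_def by simp
      moreover have "hf A = \<tau> K" using False unfolding hf_def K_def by simp
      ultimately show "hf (Some ` (U \<inter> W)) < hf A + e" using le U(3) by linarith
    qed
  next
    case True
    define U where "U = W - Some -` A"
    have sA: "Some -` A \<subseteq> W" and oU: "openin X U" using cA unfolding closedT U_def by auto
    have UW: "U \<subseteq> W" unfolding U_def by blast
    have UO: "U \<in> tm_O X" using open_tmO[OF oU UW] .
    have ne: "{K \<in> tm_K X. K \<subseteq> U} \<noteq> {}" using tmK_cpt by blast
    have ba: "bdd_above (\<tau> ` {K \<in> tm_K X. K \<subseteq> U})"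
      unfolding bdd_above_def using tau_mono tmKA tmOA[OF UO] by blast
    have "\<tau> U - e < Sup (\<tau> ` {K \<in> tm_K X. K \<subseteq> U})" using tau_regO[OF UO] e by simp
    then obtain K where K: "K \<in> tm_K X" "K \<subseteq> U" "\<tau> U - e < \<tau> K"
      using less_cSup_iff[of "\<tau> ` {K \<in> tm_K X. K \<subseteq> U}"] ne ba by auto
    have cK: "compactin X K" and KW: "K \<subseteq> W" using K(1,2) UW tmK_cpt by auto
    have e2: "W - (W - K) = K" using KW by blast
    show ?thesis
    proof (intro exI conjI)
      show "Some ` (W - K) \<union> {None} \<in> tm_O T" using tmO_T open_cocpt[OF cK KW] by blast
      have "Some -` A \<subseteq> W - K" using sA K(2) unfolding U_def by blast
      then show "A \<subseteq> Some ` (W - K) \<union> {None}" using A_None[OF True] by blast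
      have "hf (Some ` (W - K) \<union> {None}) = \<tau> W - \<tau> K" unfolding hf_def by (simp add: e2)
      moreover have "hf A = \<tau> W - \<tau> U" using True unfolding hf_def U_def by simp
      ultimately show "hf (Some ` (W - K) \<union> {None}) < hf A + e" using K(3) by linarith
    qed
  qed
  then show "\<exists>x\<in>hf ` {B \<in> tm_O T. A \<subseteq> B}. x < hf A + e" by blast
qed

lemma hf_regO:
  assumes AO: "A \<in> tm_O T"
  shows "hf A = Sup (hf ` {C \<in> tm_K T. C \<subseteq> A})"
proof (rule sup_char[symmetric])
  have oA: "openin T A" using AO tmO_T by blast
  have AA: "A \<in> tm_A T" using tmA_of_tmO[OF AO] .
  have "{} \<in> {C \<in> tm_K T. C \<subseteq> A}" using tmK_T by auto
  then show "hf ` {C \<in> tm_K T. C \<subseteq> A} \<noteq> {}" by blast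
  show "x \<le> hf A" if "x \<in> hf ` {C \<in> tm_K T. C \<subseteq> A}" for x
    using that hf_mono[OF tmA_of_tmK AA] by blast
  fix e :: real assume e: "e > 0"
  have sA: "Some -` A \<subseteq> W" and oX: "openin X (Some -` A)"
    and cX: "None \<in> A \<Longrightarrow> compactin X (W - Some -` A)"
    using oA unfolding openT opc_open_iff by auto
  have "\<exists>C. C \<in> tm_K T \<and> C \<subseteq> A \<and> hf A - e < hf C"
  proof (cases "None \<in> A")
    case False
    define U where "U = Some -` A"
    have UO: "U \<in> tm_O X" using open_tmO oX sA unfolding U_def by blast
    have ne: "{K \<in> tm_K X. K \<subseteq> U} \<noteq> {}" using tmK_cpt by blast
    have ba: "bdd_above (\<tau> ` {K \<in> tm_K X. K \<subseteq> U})"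
      unfolding bdd_above_def using tau_mono tmKA tmOA[OF UO] by blast
    have "\<tau> U - e < Sup (\<tau> ` {K \<in> tm_K X. K \<subseteq> U})" using tau_regO[OF UO] e by simp
    then obtain K where K: "K \<in> tm_K X" "K \<subseteq> U" "\<tau> U - e < \<tau> K"
      using less_cSup_iff[of "\<tau> ` {K \<in> tm_K X. K \<subseteq> U}"] ne ba by auto
    have cK: "compactin X K" and KW: "K \<subseteq> W" using K(1,2) sA tmK_cpt unfolding U_def by auto
    show ?thesis
    proof (intro exI conjI)
      show "Some ` K \<in> tm_K T" using tmK_T closed_Some[OF cK KW] by blast
      show "Some ` K \<subseteq> A" using K(2) unfolding U_def by blast
      have "hf (Some ` K) = \<tau> K" unfolding hf_def by simp
      moreover have "hf A = \<tau> U" using False unfolding hf_def U_def by simp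
      ultimately show "hf A - e < hf (Some ` K)" using K(3) by linarith
    qed
  next
    case True
    define K where "K = W - Some -` A"
    have cK: "compactin X K" using cX[OF True] unfolding K_def .
    have KW: "K \<subseteq> W" unfolding K_def by blast
    have KK: "K \<in> tm_K X" using cK tmK_cpt by blast
    have ne: "{U \<in> tm_O X. K \<subseteq> U} \<noteq> {}" using WO KW by blast
    have bb: "bdd_below (\<tau> ` {U \<in> tm_O X. K \<subseteq> U})"
      unfolding bdd_below_def using tau_nonneg tmOA by blast
    have "Inf (\<tau> ` {U \<in> tm_O X. K \<subseteq> U}) < \<tau> K + e" using tau_regK[OF KK] e by simp
    then obtain U where U: "U \<in> tm_O X" "K \<subseteq> U" "\<tau> U < \<tau> K + e"
      using cInf_less_iff[of "\<tau> ` {U \<in> tm_O X. K \<subseteq> U}"] ne bb by auto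
    define V where "V = U \<inter> W"
    have oV: "openin X V" unfolding V_def using tmO_open[OF U(1)] W_open by (rule openin_Int)
    have VW: "V \<subseteq> W" unfolding V_def by blast
    have pV: "PX V" using oV VW unfolding PX_def by simp
    have le: "\<tau> V \<le> \<tau> U" using tau_mono[OF PX_tmA[OF pV] tmOA[OF U(1)]] unfolding V_def by blast
    have e2: "W - (W - V) = V" using VW by blast
    show ?thesis
    proof (intro exI conjI)
      show "Some ` (W - V) \<union> {None} \<in> tm_K T" using tmK_T closed_cocpt[OF oV VW] by blast
      have "W - V \<subseteq> Some -` A" using U(2) KW unfolding K_def V_def by blast
      then show "Some ` (W - V) \<union> {None} \<subseteq> A" using A_None[OF True] by blast
      have "hf (Some ` (W - V) \<union> {None}) = \<tau> W - \<tau> V" unfolding hf_def by (simp add: e2)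
      moreover have "hf A = \<tau> W - \<tau> K" using True unfolding hf_def K_def by simp
      ultimately show "hf A - e < hf (Some ` (W - V) \<union> {None})" using le U(3) by linarith
    qed
  qed
  then show "\<exists>x\<in>hf ` {C \<in> tm_K T. C \<subseteq> A}. hf A - e < x" by blast
qed

lemma hf_tm: "topological_measure T hf"
  unfolding topological_measure_def
proof (intro conjI ballI impI)
  fix A assume "A \<in> tm_A T" then show "0 \<le> hf A" by (rule hf_nonneg)
next
  fix A B assume "A \<in> tm_A T" "B \<in> tm_A T" "A \<inter> B = {} \<and> A \<union> B \<in> tm_A T"
  then show "hf (A \<union> B) = hf A + hf B" using hf_add by blast
next
  fix A B assume "A \<in> tm_A T" "B \<in> tm_A T" "A \<subseteq> B"
  then show "hf A \<le> hf B" by (rule hf_mono)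
next
  fix K assume "K \<in> tm_K T" then show "hf K = Inf (hf ` {U \<in> tm_O T. K \<subseteq> U})" by (rule hf_regK)
next
  fix U assume "U \<in> tm_O T" then show "hf U = Sup (hf ` {K \<in> tm_K T. K \<subseteq> U})" by (rule hf_regO)
qed

end

theorem lemma2p2:
  fixes X :: "'a topology" and \<tau> :: "'a set \<Rightarrow> real" and W :: "'a set"
  assumes "Hausdorff_space X" and "locally_compact_space X"
    and "topological_measure X \<tau>"
    and "W \<in> tm_O X"
  shows "topological_measure (opc X W) (tau_hat X W \<tau>)"
proof -
  interpret opcs X \<tau> W using assms by unfold_locales
  show ?thesis by (rule tm_transfer[OF hf_tm]) (rule hf_eq)
qed


end
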